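(* There exists an action of the free group $F_2$ on two generators on $L_1[0,1]$ by lattice (positive) linear isometries such that there is no equivalent strictly convex norm on $L_1[0,1]$ invariant with respect to this action.
   Context: A norm $\|\cdot\|'$ is invariant with respect to the action if $\|g\cdot f\|'=\|f\|'$ for all $g\in F_2$, $f\in L_1[0,1]$; it is strictly convex if for every $x\neq y$ with $\|x\|'=\|y\|'$ one has $\|\frac{x+y}{2}\|'<\|x\|'$. *)

theory Defs
  imports "HOL-Analysis.Analysis"
begin

text \<open>L_1[0,1]: Lebesgue integrable real functions on [0,1], modulo a.e. equality.
  Elements are represented by functions real => real; all notions below respect a.e. equality.\<close>

abbreviation M01 :: "real measure" where
  "M01 \<equiv> lebesgue_on {0..1}"

definition L1 :: "(real \<Rightarrow> real) set" where
  "L1 = {f. integrable M01 f}"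

definition aeq :: "(real \<Rightarrow> real) \<Rightarrow> (real \<Rightarrow> real) \<Rightarrow> bool" where
  "aeq f g \<longleftrightarrow> (AE x in M01. f x = g x)"

definition l1norm :: "(real \<Rightarrow> real) \<Rightarrow> real" where
  "l1norm f = (LINT x|M01. \<bar>f x\<bar>)"

definition lattice_linear_isometry :: "((real \<Rightarrow> real) \<Rightarrow> (real \<Rightarrow> real)) \<Rightarrow> bool" where
  "lattice_linear_isometry T \<longleftrightarrow>
     (\<forall>f\<in>L1. T f \<in> L1) \<and>
     (\<forall>f\<in>L1. \<forall>g\<in>L1. aeq f g \<longrightarrow> aeq (T f) (T g)) \<and>
     (\<forall>f\<in>L1. \<forall>g\<in>L1. \<forall>a b::real.
        aeq (T (\<lambda>x. a * f x + b * g x)) (\<lambda>x. a * T f x + b * T g x)) \<and>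
     (\<forall>f\<in>L1. \<forall>g\<in>L1. aeq (T (\<lambda>x. max (f x) (g x))) (\<lambda>x. max (T f x) (T g x))) \<and>
     (\<forall>f\<in>L1. aeq (T (\<lambda>x. \<bar>f x\<bar>)) (\<lambda>x. \<bar>T f x\<bar>)) \<and>
     (\<forall>f\<in>L1. l1norm (T f) = l1norm f)"

definition inverse_ops :: "((real \<Rightarrow> real) \<Rightarrow> (real \<Rightarrow> real)) \<Rightarrow> ((real \<Rightarrow> real) \<Rightarrow> (real \<Rightarrow> real)) \<Rightarrow> bool" where
  "inverse_ops T S \<longleftrightarrow> (\<forall>f\<in>L1. aeq (S (T f)) f \<and> aeq (T (S f)) f)"

text \<open>The free group F_2 on generators a, b: every element is a word in a, a^-1, b, b^-1.
  An action of F_2 is determined by the (invertible) images of the generators; a word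
  acts by composition of the corresponding operators.\<close>
datatype F2_letter = GenA | GenA_inv | GenB | GenB_inv

fun letter_op :: "('x \<Rightarrow> 'x) \<Rightarrow> ('x \<Rightarrow> 'x) \<Rightarrow> ('x \<Rightarrow> 'x) \<Rightarrow> ('x \<Rightarrow> 'x) \<Rightarrow> F2_letter \<Rightarrow> ('x \<Rightarrow> 'x)" where
  "letter_op TA SA TB SB GenA = TA"
| "letter_op TA SA TB SB GenA_inv = SA"
| "letter_op TA SA TB SB GenB = TB"
| "letter_op TA SA TB SB GenB_inv = SB"

definition word_op :: "('x \<Rightarrow> 'x) \<Rightarrow> ('x \<Rightarrow> 'x) \<Rightarrow> ('x \<Rightarrow> 'x) \<Rightarrow> ('x \<Rightarrow> 'x) \<Rightarrow> F2_letter list \<Rightarrow> ('x \<Rightarrow> 'x)" where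
  "word_op TA SA TB SB w = foldr (\<lambda>l h. letter_op TA SA TB SB l \<circ> h) w id"

definition equivalent_norm :: "((real \<Rightarrow> real) \<Rightarrow> real) \<Rightarrow> bool" where
  "equivalent_norm N \<longleftrightarrow>
     (\<forall>f\<in>L1. \<forall>g\<in>L1. aeq f g \<longrightarrow> N f = N g) \<and>
     (\<forall>f\<in>L1. N f = 0 \<longleftrightarrow> aeq f (\<lambda>x. 0)) \<and>
     (\<forall>f\<in>L1. \<forall>c::real. N (\<lambda>x. c * f x) = \<bar>c\<bar> * N f) \<and>
     (\<forall>f\<in>L1. \<forall>g\<in>L1. N (\<lambda>x. f x + g x) \<le> N f + N g) \<and>
     (\<exists>c C. 0 < c \<and> 0 < C \<and> (\<forall>f\<in>L1. c * l1norm f \<le> N f \<and> N f \<le> C * l1norm f))"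

definition strictly_convex_norm :: "((real \<Rightarrow> real) \<Rightarrow> real) \<Rightarrow> bool" where
  "strictly_convex_norm N \<longleftrightarrow>
     (\<forall>f\<in>L1. \<forall>g\<in>L1. \<not> aeq f g \<and> N f = N g \<longrightarrow> N (\<lambda>x. (f x + g x) / 2) < N f)"

end

theory Submission
  imports Defs
begin

definition pw :: "real \<Rightarrow> real \<Rightarrow> real \<Rightarrow> real" where
  "pw k m x = (if x \<le> k then m / k * x else m + (1 - m) / (1 - k) * (x - k))"
definition wt :: "real \<Rightarrow> real \<Rightarrow> real \<Rightarrow> real" where
  "wt k m x = (if x \<le> k then m / k else (1 - m) / (1 - k))"
definition Top :: "real \<Rightarrow> real \<Rightarrow> (real \<Rightarrow> real) \<Rightarrow> (real \<Rightarrow> real)" where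
  "Top k m f = (\<lambda>x. wt k m x * f (pw k m x))"

lemma key_hk:
  fixes f :: "real \<Rightarrow> real"
  assumes k: "0 < k" "k < 1" and m: "0 < m" "m < 1"
    and I: "(f has_integral I) {0..m}" and J: "(f has_integral J) {m..1}"
  shows "(Top k m f has_integral (I + J)) {0..1}"
proof -
  define s1 where "s1 = m / k"
  define s2 where "s2 = (1 - m) / (1 - k)"
  have s1: "s1 > 0" using k m by (simp add: s1_def)
  have s2: "s2 > 0" using k m by (simp add: s2_def)
  have "((\<lambda>x. f (s1 *\<^sub>R x + 0)) has_integral (I /\<^sub>R s1 ^ DIM(real)))
           (cbox ((0 - 0) /\<^sub>R s1) ((m - 0) /\<^sub>R s1))"
    using I s1 by (intro has_integral_affinity') auto
  moreover have "(m - 0) /\<^sub>R s1 = k"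
    using k m s1 by (simp add: s1_def)
  ultimately have "((\<lambda>x. f (s1 * x)) has_integral (I / s1)) {0..k}"
    by (simp add: divide_inverse mult.commute)
  from has_integral_cmul[OF this, of s1]
  have A: "((\<lambda>x. s1 * f (s1 * x)) has_integral I) {0..k}" using s1 by simp
  have A': "(Top k m f has_integral I) {0..k}"
    by (rule has_integral_eq[OF _ A]) (auto simp: Top_def wt_def pw_def s1_def)
  define c where "c = m - s2 * k"
  have "((\<lambda>x. f (s2 *\<^sub>R x + c)) has_integral (J /\<^sub>R s2 ^ DIM(real)))
           (cbox ((m - c) /\<^sub>R s2) ((1 - c) /\<^sub>R s2))"
    using J s2 by (intro has_integral_affinity') auto
  moreover have "(m - c) /\<^sub>R s2 = k" using s2 by (simp add: c_def)
  moreover have "(1 - c) /\<^sub>R s2 = 1" using k m s2 mult_pos_pos[of "1-k" "1-m"] by (simp add: c_def s2_def field_simps)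
  ultimately have "((\<lambda>x. f (s2 * x + c)) has_integral (J / s2)) {k..1}"
    by (simp add: divide_inverse mult.commute)
  from has_integral_cmul[OF this, of s2]
  have B: "((\<lambda>x. s2 * f (s2 * x + c)) has_integral J) {k..1}" using s2 by simp
  have pw2: "pw k m x = s2 * x + c" "wt k m x = s2" if "x > k" for x
    using that by (auto simp: pw_def wt_def s2_def c_def add_divide_distrib[symmetric] algebra_simps)
  have B': "(Top k m f has_integral J) {k..1}"
    by (rule has_integral_spike_finite[of "{k}", OF _ _ B])
       (auto simp: Top_def pw2)
  show ?thesis using has_integral_combine[OF _ _ A' B'] k by simp
qed

lemma wt_pos: "0 < k \<Longrightarrow> k < 1 \<Longrightarrow> 0 < m \<Longrightarrow> m < 1 \<Longrightarrow> wt k m x > 0"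
  by (simp add: wt_def)

lemma L1_iff: "f \<in> L1 \<longleftrightarrow> f absolutely_integrable_on {0..1}"
  unfolding L1_def set_integrable_def mem_Collect_eq
  by (subst integrable_restrict_space) auto

lemma l1norm_eq: "f \<in> L1 \<Longrightarrow> l1norm f = integral {0..1} (\<lambda>x. \<bar>f x\<bar>)"
  unfolding l1norm_def L1_def
  by (rule lebesgue_integral_eq_integral) auto

lemma Top_integral:
  fixes f :: "real \<Rightarrow> real"
  assumes k: "0 < k" "k < 1" and m: "0 < m" "m < 1"
    and f: "f integrable_on {0..1}"
  shows "Top k m f integrable_on {0..1}" "integral {0..1} (Top k m f) = integral {0..1} f"
proof -
  have f1: "f integrable_on {0..m}" using integrable_on_subinterval[of f "{0..1}" 0 m] f m by auto
  have f2: "f integrable_on {m..1}" using integrable_on_subinterval[of f "{0..1}" m 1] f m by auto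
  have h: "(Top k m f has_integral (integral {0..m} f + integral {m..1} f)) {0..1}"
    using key_hk[OF k m integrable_integral[OF f1] integrable_integral[OF f2]] .
  then show "Top k m f integrable_on {0..1}" by blast
  have "(f has_integral (integral {0..m} f + integral {m..1} f)) {0..1}"
    by (rule has_integral_combine[OF _ _ integrable_integral[OF f1] integrable_integral[OF f2]]) (use m in auto)
  then have "integral {0..m} f + integral {m..1} f = integral {0..1} f"
    by (rule integral_unique[symmetric])
  then show "integral {0..1} (Top k m f) = integral {0..1} f" using h integral_unique by metis
qed

lemma Top_abs_int:
  fixes f :: "real \<Rightarrow> real"
  assumes k: "0 < k" "k < 1" and m: "0 < m" "m < 1"
    and f: "f absolutely_integrable_on {0..1}"
  shows "Top k m f absolutely_integrable_on {0..1}"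
    "integral {0..1} (\<lambda>x. \<bar>Top k m f x\<bar>) = integral {0..1} (\<lambda>x. \<bar>f x\<bar>)"
proof -
  have fi: "f integrable_on {0..1}" using f set_lebesgue_integral_eq_integral(1) by blast
  have fa: "(\<lambda>x. \<bar>f x\<bar>) integrable_on {0..1}"
    using f unfolding absolutely_integrable_on_def real_norm_def by blast
  have eq: "(\<lambda>x. \<bar>Top k m f x\<bar>) = Top k m (\<lambda>x. \<bar>f x\<bar>)"
    using wt_pos[OF k m] by (auto simp: Top_def abs_mult abs_of_pos)
  show "Top k m f absolutely_integrable_on {0..1}"
  proof (rule absolutely_integrable_integrable_bound[where g="Top k m (\<lambda>x. \<bar>f x\<bar>)"])
    fix x show "norm (Top k m f x) \<le> Top k m (\<lambda>x. \<bar>f x\<bar>) x"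
      using fun_cong[OF eq, of x] by simp
  qed (use Top_integral[OF k m fi] Top_integral[OF k m fa] in auto)
  show "integral {0..1} (\<lambda>x. \<bar>Top k m f x\<bar>) = integral {0..1} (\<lambda>x. \<bar>f x\<bar>)"
    using eq Top_integral[OF k m fa] by simp
qed

lemma Top_L1:
  assumes "0 < k" "k < 1" "0 < m" "m < 1" "f \<in> L1"
  shows "Top k m f \<in> L1"
  using Top_abs_int(1)[OF assms(1-4)] assms(5) by (simp add: L1_iff)

lemma Top_norm:
  assumes "0 < k" "k < 1" "0 < m" "m < 1" "f \<in> L1"
  shows "l1norm (Top k m f) = l1norm f"
  using Top_abs_int(2)[OF assms(1-4)] assms(5) Top_L1[OF assms]
  by (simp add: L1_iff l1norm_eq)

lemma L1_diff: "f \<in> L1 \<Longrightarrow> g \<in> L1 \<Longrightarrow> (\<lambda>x. f x - g x) \<in> L1"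
  by (simp add: L1_def)

lemma aeq_iff_norm:
  assumes "f \<in> L1" "g \<in> L1"
  shows "aeq f g \<longleftrightarrow> l1norm (\<lambda>x. f x - g x) = 0"
proof -
  have i: "integrable M01 (\<lambda>x. \<bar>f x - g x\<bar>)"
    using L1_diff[OF assms] by (simp add: L1_def)
  have "l1norm (\<lambda>x. f x - g x) = 0 \<longleftrightarrow> (AE x in M01. \<bar>f x - g x\<bar> = 0)"
    unfolding l1norm_def by (rule integral_nonneg_eq_0_iff_AE[OF i]) auto
  then show ?thesis by (simp add: aeq_def)
qed

lemma max_mult_nonneg: "(c::real) \<ge> 0 \<Longrightarrow> c * max a b = max (c * a) (c * b)"
proof (cases "a \<le> b")
  case True
  assume c: "c \<ge> 0"
  have "c * a \<le> c * b" using True c by (rule mult_left_mono)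
  then show ?thesis using True by (simp add: max_def)
next
  case False
  assume c: "c \<ge> 0"
  have "c * b \<le> c * a" using False c by (intro mult_left_mono) auto
  then show ?thesis using False by (auto simp: max_def)
qed

lemma Top_lli:
  assumes k: "0 < k" "k < 1" and m: "0 < m" "m < 1"
  shows "lattice_linear_isometry (Top k m)"
  unfolding lattice_linear_isometry_def
proof (intro conjI ballI allI impI)
  fix f assume f: "f \<in> L1"
  show "Top k m f \<in> L1" using Top_L1[OF k m f] .
  show "l1norm (Top k m f) = l1norm f" using Top_norm[OF k m f] .
  show "aeq (Top k m (\<lambda>x. \<bar>f x\<bar>)) (\<lambda>x. \<bar>Top k m f x\<bar>)"
    unfolding aeq_def using wt_pos[OF k m] by (auto simp: Top_def abs_mult abs_of_pos)
next
  fix f g assume f: "f \<in> L1" and g: "g \<in> L1"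
  show "aeq (Top k m (\<lambda>x. max (f x) (g x))) (\<lambda>x. max (Top k m f x) (Top k m g x))"
    unfolding aeq_def using wt_pos[OF k m] by (auto simp: Top_def max_mult_nonneg less_imp_le)
  fix a b :: real
  show "aeq (Top k m (\<lambda>x. a * f x + b * g x)) (\<lambda>x. a * Top k m f x + b * Top k m g x)"
    unfolding aeq_def by (auto simp: Top_def algebra_simps)
next
  fix f g assume f: "f \<in> L1" and g: "g \<in> L1" and fg: "aeq f g"
  have "l1norm (\<lambda>x. f x - g x) = 0" using fg aeq_iff_norm[OF f g] by simp
  moreover have "Top k m (\<lambda>x. f x - g x) = (\<lambda>x. Top k m f x - Top k m g x)"
    by (auto simp: Top_def algebra_simps)
  ultimately have "l1norm (\<lambda>x. Top k m f x - Top k m g x) = 0"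
    using Top_norm[OF k m L1_diff[OF f g]] by simp
  then show "aeq (Top k m f) (Top k m g)"
    using aeq_iff_norm[OF Top_L1[OF k m f] Top_L1[OF k m g]] by simp
qed

lemma pw_inv:
  assumes k: "0 < k" "k < 1" and m: "0 < m" "m < 1"
  shows "pw m k (pw k m x) = x \<and> wt m k (pw k m x) * wt k m x = 1"
proof (cases "x \<le> k")
  case True
  have "m / k * x \<le> m / k * k" using True k m by (intro mult_left_mono) auto
  then have "m / k * x \<le> m" using k by simp
  then show ?thesis using True k m by (simp add: pw_def wt_def)
next
  case False
  have "0 < (1 - m) / (1 - k) * (x - k)" using False k m by simp
  then have "\<not> m + (1 - m) / (1 - k) * (x - k) \<le> m" by simp
  then show ?thesis using False k m mult_pos_pos[of "1-k" "1-m"] by (simp add: pw_def wt_def field_simps)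
qed

lemma Top_inv:
  assumes k: "0 < k" "k < 1" and m: "0 < m" "m < 1"
  shows "inverse_ops (Top k m) (Top m k)"
  unfolding inverse_ops_def aeq_def
proof (intro ballI conjI AE_I2)
  fix f :: "real \<Rightarrow> real" and x :: real
  have "Top m k (Top k m f) x = (wt k m (pw m k x) * wt m k x) * f (pw k m (pw m k x))"
    by (simp add: Top_def ac_simps)
  then show "Top m k (Top k m f) x = f x"
    using pw_inv[OF m k, of x] by simp
  have "Top k m (Top m k f) x = (wt m k (pw k m x) * wt k m x) * f (pw m k (pw k m x))"
    by (simp add: Top_def ac_simps)
  then show "Top k m (Top m k f) x = f x"
    using pw_inv[OF k m, of x] by simp
qed

theorem proposition5p1:
  shows "\<exists>TA SA TB SB.
     lattice_linear_isometry TA \<and> lattice_linear_isometry SA \<and>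
     lattice_linear_isometry TB \<and> lattice_linear_isometry SB \<and>
     inverse_ops TA SA \<and> inverse_ops TB SB \<and>
     \<not> (\<exists>N. equivalent_norm N \<and> strictly_convex_norm N \<and>
            (\<forall>w. \<forall>f\<in>L1. N (word_op TA SA TB SB w f) = N f))"
proof (intro exI conjI)
  define TA where "TA = Top (1/2) (1/4)"
  define SA where "SA = Top (1/4) (1/2)"
  define TB where "TB = Top (1/2) (3/8)"
  define SB where "SB = Top (3/8) (1/2)"
  show "lattice_linear_isometry (Top (1/2) (1/4))" by (rule Top_lli) auto
  show "lattice_linear_isometry (Top (1/4) (1/2))" by (rule Top_lli) auto
  show "lattice_linear_isometry (Top (1/2) (3/8))" by (rule Top_lli) auto
  show "lattice_linear_isometry (Top (3/8) (1/2))" by (rule Top_lli) auto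
  show "inverse_ops (Top (1/2) (1/4)) (Top (1/4) (1/2))" by (rule Top_inv) auto
  show "inverse_ops (Top (1/2) (3/8)) (Top (3/8) (1/2))" by (rule Top_inv) auto
  show "\<not> (\<exists>N. equivalent_norm N \<and> strictly_convex_norm N \<and>
            (\<forall>w. \<forall>f\<in>L1. N (word_op (Top (1/2) (1/4)) (Top (1/4) (1/2))
                (Top (1/2) (3/8)) (Top (3/8) (1/2)) w f) = N f))"
  proof
    assume "\<exists>N. equivalent_norm N \<and> strictly_convex_norm N \<and>
            (\<forall>w. \<forall>f\<in>L1. N (word_op (Top (1/2) (1/4)) (Top (1/4) (1/2))
                (Top (1/2) (3/8)) (Top (3/8) (1/2)) w f) = N f)"
    then obtain N where sc: "strictly_convex_norm N" and
      inv: "\<And>w f. f \<in> L1 \<Longrightarrow> N (word_op (Top (1/2) (1/4)) (Top (1/4) (1/2))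
                (Top (1/2) (3/8)) (Top (3/8) (1/2)) w f) = N f" by blast
    define f0 :: "real \<Rightarrow> real" where "f0 = (\<lambda>x. 1)"
    have f0: "f0 \<in> L1" unfolding L1_def f0_def
      by (simp add: continuous_imp_integrable_real)
    define g where "g = Top (1/2) (1/4) f0"
    have g: "g \<in> L1" unfolding g_def by (rule Top_L1[OF _ _ _ _ f0]) auto
    have Ng: "N g = N f0" using inv[OF f0, of "[GenA]"] by (simp add: word_op_def g_def)
    have Nh: "N (Top (1/2) (3/8) f0) = N f0" using inv[OF f0, of "[GenB]"] by (simp add: word_op_def)
    have h: "(\<lambda>x. (f0 x + g x) / 2) = Top (1/2) (3/8) f0"
      by (auto simp: g_def Top_def wt_def f0_def)
    have na: "\<not> aeq f0 g"
    proof
      assume "aeq f0 g"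
      then have "AE x in M01. f0 x = g x" by (simp add: aeq_def)
      then obtain Z where Z: "{x \<in> space M01. \<not> f0 x = g x} \<subseteq> Z" "emeasure M01 Z = 0" "Z \<in> sets M01"
        by (rule AE_E)
      have "{0..1/2} \<subseteq> {x \<in> space M01. \<not> f0 x = g x}"
        by (auto simp: g_def Top_def wt_def f0_def)
      then have "emeasure M01 {0..1/2} \<le> emeasure M01 Z" using Z by (intro emeasure_mono) auto
      moreover have "emeasure M01 {0..1/2::real} = emeasure lebesgue {0..1/2::real}"
        by (rule emeasure_restrict_space) auto
      moreover have "emeasure lebesgue {0..1/2::real} > 0"
        by (simp add: emeasure_completion ennreal_inverse_positive)
      ultimately show False using Z by simp
    qed
    have "N (\<lambda>x. (f0 x + g x) / 2) < N f0"
    proof -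
      have "\<not> aeq f0 g \<and> N f0 = N g \<longrightarrow> N (\<lambda>x. (f0 x + g x) / 2) < N f0"
        using sc f0 g unfolding strictly_convex_norm_def by blast
      then show ?thesis using na Ng by simp
    qed
    then show False using h Nh by simp
  qed
qed

end
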